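(* Let $G=(V,E)$ be a $k$-edge-connected graph, $F\subseteq E$, and let $S_1,\dots,S_\ell$ be a natural decomposition of $(V,F)$ into $k/4$-edge-connected components. Let $I\subseteq[\ell]$ be such that $S_I:=\bigcup_{i\in I}S_i$ satisfies $\emptyset\ne S_I\subsetneq V$. If $d_F(S_I)\ge \frac78 d(S_I)$ and $\phi(S_I)<1/8$, then $$\frac{\partial(S_I)}{\sum_{i\in I}\partial(S_i)}\ \ge\ 2\phi(S_I).$$
   Context: Graphs are finite, undirected, unweighted, loopless, possibly with parallel edges; $k$-edge-connected means every cut $(S,\overline S)$, $\emptyset\ne S\subsetneq V$, has at least $k$ edges. For $S\subseteq V$: $\partial(S)$ is the number of edges of $G$ with exactly one endpoint in $S$, $d(S)$ is the sum of $G$-degrees of vertices of $S$, $d_F(S)$ is the sum over $v\in S$ of the number of edges of $F$ incident to $v$, and $\phi(S)=\partial(S)/d(S)$. A natural decomposition of a graph $H=(V,F)$ into $r$-edge-connected components is obtained as follows: start with the partition $\{V\}$; while some part $P$ is such that the induced graph $H[P]$ is not $r$-edge-connected, choose a partition $(P_1,P_2)$ of $P$ into nonempty sets with fewer than $r$ edges of $H[P]$ between $P_1$ and $P_2$, and replace $P$ by $P_1,P_2$; the final parts are $S_1,\dots,S_\ell$. *)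

theory Defs
  imports Complex_Main
begin

text \<open>Parallel edges are distinct identifiers with the same endpoints.\<close>
definition multigraph :: "'a set \<Rightarrow> 'e set \<Rightarrow> ('e \<Rightarrow> 'a \<times> 'a) \<Rightarrow> bool" where
  "multigraph V E ends \<longleftrightarrow> finite V \<and> finite E \<and>
     (\<forall>e\<in>E. fst (ends e) \<in> V \<and> snd (ends e) \<in> V \<and> fst (ends e) \<noteq> snd (ends e))"

definition cut_edges :: "('e \<Rightarrow> 'a \<times> 'a) \<Rightarrow> 'e set \<Rightarrow> 'a set \<Rightarrow> 'e set" where
  "cut_edges ends X S = {e \<in> X. (fst (ends e) \<in> S) \<noteq> (snd (ends e) \<in> S)}"

definition bdry :: "'e set \<Rightarrow> ('e \<Rightarrow> 'a \<times> 'a) \<Rightarrow> 'a set \<Rightarrow> nat" where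
  "bdry E ends S = card (cut_edges ends E S)"

definition deg :: "'e set \<Rightarrow> ('e \<Rightarrow> 'a \<times> 'a) \<Rightarrow> 'a \<Rightarrow> nat" where
  "deg X ends v = card {e \<in> X. fst (ends e) = v \<or> snd (ends e) = v}"

definition degS :: "'e set \<Rightarrow> ('e \<Rightarrow> 'a \<times> 'a) \<Rightarrow> 'a set \<Rightarrow> nat" where
  "degS X ends S = (\<Sum>v\<in>S. deg X ends v)"

definition cond :: "'e set \<Rightarrow> ('e \<Rightarrow> 'a \<times> 'a) \<Rightarrow> 'a set \<Rightarrow> real" where
  "cond E ends S = real (bdry E ends S) / real (degS E ends S)"

definition induced_edges :: "('e \<Rightarrow> 'a \<times> 'a) \<Rightarrow> 'e set \<Rightarrow> 'a set \<Rightarrow> 'e set" where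
  "induced_edges ends X P = {e \<in> X. fst (ends e) \<in> P \<and> snd (ends e) \<in> P}"

definition edge_conn :: "real \<Rightarrow> 'a set \<Rightarrow> 'e set \<Rightarrow> ('e \<Rightarrow> 'a \<times> 'a) \<Rightarrow> bool" where
  "edge_conn r P X ends \<longleftrightarrow>
     (\<forall>Q. Q \<noteq> {} \<and> Q \<subset> P \<longrightarrow> real (card (cut_edges ends (induced_edges ends X P) Q)) \<ge> r)"

text \<open>Partitions reachable by the splitting process of the natural decomposition of
  H = (V,F) into r-edge-connected components.\<close>
inductive nd_reach :: "real \<Rightarrow> 'a set \<Rightarrow> 'e set \<Rightarrow> ('e \<Rightarrow> 'a \<times> 'a) \<Rightarrow> 'a set set \<Rightarrow> bool"
  for r V F ends where
  start: "nd_reach r V F ends {V}"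
| split: "\<lbrakk> nd_reach r V F ends Ps; P \<in> Ps; \<not> edge_conn r P F ends;
           P1 \<noteq> {}; P2 \<noteq> {}; P1 \<union> P2 = P; P1 \<inter> P2 = {};
           real (card (cut_edges ends (induced_edges ends F P) P1)) < r \<rbrakk>
         \<Longrightarrow> nd_reach r V F ends ((Ps - {P}) \<union> {P1, P2})"

definition natural_decomp :: "real \<Rightarrow> 'a set \<Rightarrow> 'e set \<Rightarrow> ('e \<Rightarrow> 'a \<times> 'a) \<Rightarrow> 'a set set \<Rightarrow> bool" where
  "natural_decomp r V F ends Ps \<longleftrightarrow> nd_reach r V F ends Ps \<and> (\<forall>P\<in>Ps. edge_conn r P F ends)"

end

theory Submission imports Defs begin

lemma card_filter_real: "finite A \<Longrightarrow> real (card {x\<in>A. Q x}) = (\<Sum>x\<in>A. of_bool (Q x))"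
proof -
  assume "finite A"
  have "{x\<in>A. Q x} = A \<inter> {x. Q x}" by blast
  then show ?thesis using \<open>finite A\<close> by simp
qed

lemma degS_sum:
  assumes "finite X" "finite S" "\<forall>e\<in>X. fst (ends e) \<noteq> snd (ends e)"
  shows "real (degS X ends S) = (\<Sum>e\<in>X. of_bool (fst (ends e) \<in> S) + of_bool (snd (ends e) \<in> S))"
proof -
  have "real (degS X ends S) = (\<Sum>v\<in>S. \<Sum>e\<in>X. (of_bool (fst (ends e) = v \<or> snd (ends e) = v)::real))"
    unfolding degS_def deg_def of_nat_sum using assms(1) by (simp only: card_filter_real)
  also have "\<dots> = (\<Sum>e\<in>X. \<Sum>v\<in>S. (of_bool (fst (ends e) = v \<or> snd (ends e) = v)::real))"
    by (rule sum.swap)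
  also have "\<dots> = (\<Sum>e\<in>X. of_bool (fst (ends e) \<in> S) + of_bool (snd (ends e) \<in> S))"
  proof (rule sum.cong[OF refl])
    fix e assume "e \<in> X"
    hence ne: "fst (ends e) \<noteq> snd (ends e)" using assms by auto
    have "(\<Sum>v\<in>S. (of_bool (fst (ends e) = v \<or> snd (ends e) = v)::real))
        = (\<Sum>v\<in>S. (if fst (ends e) = v then 1 else 0) + (if snd (ends e) = v then 1 else 0))"
      using ne by (intro sum.cong) auto
    also have "\<dots> = of_bool (fst (ends e) \<in> S) + of_bool (snd (ends e) \<in> S)"
      using assms(2) by (simp add: sum.distrib)
    finally show "(\<Sum>v\<in>S. (of_bool (fst (ends e) = v \<or> snd (ends e) = v)::real))
        = of_bool (fst (ends e) \<in> S) + of_bool (snd (ends e) \<in> S)" .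
  qed
  finally show ?thesis .
qed

lemma nd_part:
  assumes "nd_reach r V F ends Ps" "V \<noteq> {}"
  shows "finite Ps \<and> (\<forall>P\<in>Ps. P \<noteq> {} \<and> P \<subseteq> V) \<and> (\<forall>P\<in>Ps. \<forall>Q\<in>Ps. P \<noteq> Q \<longrightarrow> P \<inter> Q = {})"
  using assms(1)
proof induction
  case start thus ?case using assms(2) by auto
next
  case (split Ps P P1 P2)
  have IH1: "finite Ps" using split.IH by (rule conjunct1)
  have IH2: "\<forall>X\<in>Ps. X \<noteq> {} \<and> X \<subseteq> V" using split.IH by (rule conjunct1[OF conjunct2])
  have d: "\<forall>X\<in>Ps. \<forall>Y\<in>Ps. X \<noteq> Y \<longrightarrow> X \<inter> Y = {}"
    using split.IH by (rule conjunct2[OF conjunct2])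
  have fin: "finite ((Ps - {P}) \<union> {P1, P2})" using IH1 by simp
  have PV: "P \<subseteq> V" using IH2 split(2) by blast
  have a: "\<forall>Q\<in>(Ps - {P}) \<union> {P1, P2}. Q \<noteq> {} \<and> Q \<subseteq> V"
    using IH2 PV split(4,5,6) by blast
  have b: "\<forall>Q\<in>Ps - {P}. Q \<inter> P = {}" using d split(2) by blast
  have c: "\<forall>Q\<in>Ps - {P}. Q \<inter> P1 = {} \<and> Q \<inter> P2 = {}"
    using b split(6) by blast
  show ?case
  proof (intro conjI fin a ballI impI)
    fix Q R assume Q: "Q \<in> (Ps - {P}) \<union> {P1, P2}" and R: "R \<in> (Ps - {P}) \<union> {P1, P2}" and "Q \<noteq> R"
    from Q R \<open>Q \<noteq> R\<close> show "Q \<inter> R = {}"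
    proof (elim UnE)
      assume "Q \<in> Ps - {P}" "R \<in> Ps - {P}" "Q \<noteq> R" then show ?thesis using d by blast
    next
      assume "Q \<in> Ps - {P}" "R \<in> {P1, P2}" then show ?thesis using c by blast
    next
      assume "Q \<in> {P1, P2}" "R \<in> Ps - {P}" then show ?thesis using c by blast
    next
      assume "Q \<in> {P1, P2}" "R \<in> {P1, P2}" "Q \<noteq> R" then show ?thesis using split(7) by blast
    qed
  qed
qed

definition xset :: "'e set \<Rightarrow> ('e \<Rightarrow> 'a \<times> 'a) \<Rightarrow> 'a set \<Rightarrow> 'a set set \<Rightarrow> 'e set" where
  "xset F ends A Ps = {e\<in>F. fst (ends e) \<in> A \<and> snd (ends e) \<in> A \<and>
      \<not>(\<exists>Q\<in>Ps. fst (ends e) \<in> Q \<and> snd (ends e) \<in> Q)}"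

lemma nd_count:
  assumes "nd_reach r V F ends Ps" "V \<noteq> {}" "finite F" "A \<subseteq> V" "A \<noteq> {}"
  shows "real (card (xset F ends A Ps)) + r \<le> r * real (card {Q\<in>Ps. Q \<inter> A \<noteq> {}})"
  using assms(1)
proof induction
  case start
  have "xset F ends A {V} = {}" using assms(4) by (auto simp: xset_def)
  moreover have "{Q\<in>{V}. Q \<inter> A \<noteq> {}} = {V}" using assms(4,5) by auto
  ultimately show ?case by simp
next
  case (split Ps P P1 P2)
  have part: "finite Ps \<and> (\<forall>P\<in>Ps. P \<noteq> {} \<and> P \<subseteq> V) \<and> (\<forall>P\<in>Ps. \<forall>Q\<in>Ps. P \<noteq> Q \<longrightarrow> P \<inter> Q = {})"
    using nd_part[OF split(1) assms(2)] .
  have disj: "\<forall>X\<in>Ps. \<forall>Y\<in>Ps. X \<noteq> Y \<longrightarrow> X \<inter> Y = {}"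
    using part by (rule conjunct2[OF conjunct2])
  have finPs: "finite Ps" using part by (rule conjunct1)
  have P1n: "P1 \<notin> Ps"
  proof
    assume "P1 \<in> Ps"
    have "P1 = P"
    proof (rule ccontr)
      assume "P1 \<noteq> P"
      then have "P1 \<inter> P = {}" using disj \<open>P1 \<in> Ps\<close> split(2) by blast
      then show False using split(4,6) by blast
    qed
    then show False using split(5,6,7) by blast
  qed
  have P2n: "P2 \<notin> Ps"
  proof
    assume "P2 \<in> Ps"
    have "P2 = P"
    proof (rule ccontr)
      assume "P2 \<noteq> P"
      then have "P2 \<inter> P = {}" using disj \<open>P2 \<in> Ps\<close> split(2) by blast
      then show False using split(5,6) by blast
    qed
    then show False using split(4,6,7) by blast
  qed
  have P12: "P1 \<noteq> P2" using split(4,7) by blast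
  define Ps' where "Ps' = (Ps - {P}) \<union> {P1, P2}"
  define D where "D = {e\<in>F. fst (ends e) \<in> A \<and> snd (ends e) \<in> A \<and> fst (ends e) \<in> P \<and> snd (ends e) \<in> P
       \<and> (fst (ends e) \<in> P1) \<noteq> (snd (ends e) \<in> P1)}"
  have sub: "xset F ends A Ps' \<subseteq> xset F ends A Ps \<union> D"
  proof
    fix e assume e: "e \<in> xset F ends A Ps'"
    show "e \<in> xset F ends A Ps \<union> D"
    proof (cases "e \<in> xset F ends A Ps")
      case False
      then obtain Q where Q: "Q \<in> Ps" "fst (ends e) \<in> Q" "snd (ends e) \<in> Q"
        using e by (auto simp: xset_def)
      have "Q = P" using Q e unfolding xset_def Ps'_def by blast
      then show ?thesis using Q e split(6) unfolding xset_def Ps'_def D_def by blast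
    qed simp
  qed
  have Dcut: "D \<subseteq> cut_edges ends (induced_edges ends F P) P1"
    by (auto simp: D_def cut_edges_def induced_edges_def)
  have fincut: "finite (cut_edges ends (induced_edges ends F P) P1)"
    using assms(3) by (auto simp: cut_edges_def induced_edges_def)
  have cD: "real (card D) < r"
    using card_mono[OF fincut Dcut] split(8) by linarith
  have r0: "r > 0" using split(8) by linarith
  have finx: "finite (xset F ends A Ps)" "finite D" using assms(3) by (auto simp: xset_def D_def)
  have cx: "card (xset F ends A Ps') \<le> card (xset F ends A Ps) + card D"
    using card_mono[OF _ sub] card_Un_le[of "xset F ends A Ps" D] finx by auto
  define N where "N = {Q\<in>Ps. Q \<inter> A \<noteq> {}}"
  define N' where "N' = {Q\<in>Ps'. Q \<inter> A \<noteq> {}}"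
  have IH: "real (card (xset F ends A Ps)) + r \<le> r * real (card N)"
    using split.IH by (simp add: N_def)
  have finN: "finite N" using finPs by (simp add: N_def)
  show ?case
  proof (cases "A \<inter> P1 \<noteq> {} \<and> A \<inter> P2 \<noteq> {}")
    case True
    have "N' = insert P1 (insert P2 (N - {P}))" using True by (auto simp: N_def N'_def Ps'_def)
    moreover have "P \<in> N" using True split(2,6) by (auto simp: N_def)
    moreover have "P1 \<notin> N" "P2 \<notin> N" using P1n P2n by (auto simp: N_def)
    ultimately have "card N' = card N + 1" using P12 finN card.remove[OF finN \<open>P \<in> N\<close>]
      by simp
    then have "real (card N') = real (card N) + 1" by simp
    then have "r * real (card N') = r * real (card N) + r" by (simp add: algebra_simps)
    then have "real (card (xset F ends A Ps')) + r \<le> r * real (card N')"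
      using IH cx cD by linarith
    then show ?thesis by (simp add: N'_def Ps'_def)
  next
    case False
    have "D = {}" using False split(6) by (auto simp: D_def)
    have "card N \<le> card N'"
    proof (cases "P \<in> N")
      case True
      then obtain Pi where Pi: "Pi \<in> {P1, P2}" "Pi \<inter> A \<noteq> {}" using split(6) by (auto simp: N_def)
      have "N' \<supseteq> insert Pi (N - {P})" using Pi by (auto simp: N_def N'_def Ps'_def)
      moreover have "Pi \<notin> N - {P}" using Pi P1n P2n by (auto simp: N_def)
      moreover have "finite N'" using finPs by (simp add: N'_def Ps'_def)
      ultimately have "card (insert Pi (N - {P})) \<le> card N'" by (intro card_mono) auto
      moreover have "card (insert Pi (N - {P})) = card N"
        using True finN \<open>Pi \<notin> N - {P}\<close> card.remove[OF finN True] by simp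
      ultimately show ?thesis by simp
    next
      case False
      have "N \<subseteq> N'" using False by (auto simp: N_def N'_def Ps'_def)
      moreover have "finite N'" using finPs by (simp add: N'_def Ps'_def)
      ultimately show ?thesis by (simp add: card_mono)
    qed
    then have "r * real (card N) \<le> r * real (card N')" using r0 by simp
    then have "real (card (xset F ends A Ps')) + r \<le> r * real (card N')"
      using IH cx \<open>D = {}\<close> by simp
    then show ?thesis by (simp add: N'_def Ps'_def)
  qed
qed


lemma count_le:
  assumes "finite I" "I \<subseteq> Ps" "\<forall>X\<in>Ps. \<forall>Y\<in>Ps. X \<noteq> Y \<longrightarrow> X \<inter> Y = {}"
  shows "(\<Sum>P\<in>I. of_bool (u \<in> P) :: real) \<le> of_bool (u \<in> \<Union>I)"
proof -
  have eq: "(\<Sum>P\<in>I. of_bool (u \<in> P) :: real) = real (card {P\<in>I. u \<in> P})"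
    using card_filter_real[OF assms(1), of "\<lambda>P. u \<in> P"] by simp
  have le1: "card {P\<in>I. u \<in> P} \<le> 1"
  proof -
    have "\<forall>a\<in>{P\<in>I. u \<in> P}. \<forall>b\<in>{P\<in>I. u \<in> P}. a = b" using assms(2,3) by blast
    then show ?thesis using assms(1) card_le_Suc0_iff_eq[of "{P\<in>I. u \<in> P}"] by simp
  qed
  show ?thesis
  proof (cases "u \<in> \<Union>I")
    case True then show ?thesis using eq le1 by simp
  next
    case False
    then have "{P\<in>I. u \<in> P} = {}" by blast
    then show ?thesis using eq by simp
  qed
qed

lemma edge_ineq1:
  assumes "finite I"
  shows "of_bool ((u \<in> \<Union>I) \<noteq> (v \<in> \<Union>I)) \<le> (\<Sum>P\<in>I. of_bool ((u \<in> P) \<noteq> (v \<in> P)) :: real)"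
proof (cases "(u \<in> \<Union>I) \<noteq> (v \<in> \<Union>I)")
  case True
  then obtain P where P: "P \<in> I" "(u \<in> P) \<noteq> (v \<in> P)" by blast
  have "(of_bool ((u \<in> P) \<noteq> (v \<in> P)) :: real) \<le> (\<Sum>P\<in>I. of_bool ((u \<in> P) \<noteq> (v \<in> P)))"
    by (rule member_le_sum[OF P(1)]) (auto simp: assms)
  then show ?thesis using P True by simp
next
  case False then show ?thesis by (simp add: sum_nonneg)
qed

lemma edge_ineq2:
  assumes "finite I" "I \<subseteq> Ps" "\<forall>X\<in>Ps. \<forall>Y\<in>Ps. X \<noteq> Y \<longrightarrow> X \<inter> Y = {}"
  shows "(\<Sum>P\<in>I. of_bool ((u \<in> P) \<noteq> (v \<in> P)) :: real) \<le>
    of_bool ((u \<in> \<Union>I) \<noteq> (v \<in> \<Union>I)) + 2 * of_bool (f \<and> u \<in> \<Union>I \<and> v \<in> \<Union>I \<and> \<not>(\<exists>Q\<in>Ps. u \<in> Q \<and> v \<in> Q))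
    + (of_bool (u \<in> \<Union>I) + of_bool (v \<in> \<Union>I)) - of_bool f * (of_bool (u \<in> \<Union>I) + of_bool (v \<in> \<Union>I))"
proof (cases "\<exists>Q\<in>Ps. u \<in> Q \<and> v \<in> Q")
  case True
  then obtain Q where Q: "Q \<in> Ps" "u \<in> Q" "v \<in> Q" by blast
  have "(\<Sum>P\<in>I. of_bool ((u \<in> P) \<noteq> (v \<in> P)) :: real) = 0"
  proof (rule sum.neutral, rule ballI)
    fix P assume "P \<in> I"
    then have "P = Q \<or> P \<inter> Q = {}" using assms(2,3) Q(1) by blast
    then show "(of_bool ((u \<in> P) \<noteq> (v \<in> P)) :: real) = 0" using Q by auto
  qed
  then show ?thesis by (cases f) auto
next
  case False
  have "(\<Sum>P\<in>I. of_bool ((u \<in> P) \<noteq> (v \<in> P)) :: real) \<le> (\<Sum>P\<in>I. of_bool (u \<in> P) + of_bool (v \<in> P))"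
    by (rule sum_mono) auto
  also have "\<dots> = (\<Sum>P\<in>I. of_bool (u \<in> P)) + (\<Sum>P\<in>I. of_bool (v \<in> P))" by (rule sum.distrib)
  also have "\<dots> \<le> of_bool (u \<in> \<Union>I) + of_bool (v \<in> \<Union>I)"
    using count_le[OF assms, of u] count_le[OF assms, of v] by linarith
  finally have le: "(\<Sum>P\<in>I. of_bool ((u \<in> P) \<noteq> (v \<in> P)) :: real) \<le> of_bool (u \<in> \<Union>I) + of_bool (v \<in> \<Union>I)" .
  show ?thesis using le False by (cases f; cases "u \<in> \<Union>I"; cases "v \<in> \<Union>I") auto
qed


theorem mainTheorem12:
  fixes V :: "'a set" and E F :: "'e set" and ends :: "'e \<Rightarrow> 'a \<times> 'a"
    and k :: nat and Ps I :: "'a set set"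
  assumes G: "multigraph V E ends"
    and kconn: "edge_conn (real k) V E ends"
    and FE: "F \<subseteq> E"
    and dec: "natural_decomp (real k / 4) V F ends Ps"
    and IPs: "I \<subseteq> Ps"
    and ne: "\<Union>I \<noteq> {}" and proper: "\<Union>I \<subset> V"
    and dF: "real (degS F ends (\<Union>I)) \<ge> 7 / 8 * real (degS E ends (\<Union>I))"
    and phi: "cond E ends (\<Union>I) < 1 / 8"
  shows "real (bdry E ends (\<Union>I)) / real (\<Sum>S\<in>I. bdry E ends S) \<ge> 2 * cond E ends (\<Union>I)"
proof -
  have finV: "finite V" and finE: "finite E"
    and loop: "\<forall>e\<in>E. fst (ends e) \<in> V \<and> snd (ends e) \<in> V \<and> fst (ends e) \<noteq> snd (ends e)"
    using G by (auto simp: multigraph_def)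
  define S where "S = \<Union>I"
  have SV: "S \<subseteq> V" "S \<noteq> {}" using proper ne by (auto simp: S_def)
  have Vne: "V \<noteq> {}" using SV by blast
  have reach: "nd_reach (real k / 4) V F ends Ps" using dec by (simp add: natural_decomp_def)
  note part = nd_part[OF reach Vne]
  have finPs: "finite Ps" using part by (rule conjunct1)
  have Pne: "\<forall>X\<in>Ps. X \<noteq> {} \<and> X \<subseteq> V" using part by (rule conjunct1[OF conjunct2])
  have disj: "\<forall>X\<in>Ps. \<forall>Y\<in>Ps. X \<noteq> Y \<longrightarrow> X \<inter> Y = {}" using part by (rule conjunct2[OF conjunct2])
  have finI: "finite I" using finPs IPs finite_subset by blast
  have finS: "finite S" using SV finV finite_subset by blast
  have finF: "finite F" using FE finE finite_subset by blast
  define cf where "cf = (\<lambda>e. \<Sum>P\<in>I. of_bool ((fst (ends e) \<in> P) \<noteq> (snd (ends e) \<in> P)) :: real)"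
  define b where "b = (\<lambda>e. of_bool ((fst (ends e) \<in> S) \<noteq> (snd (ends e) \<in> S)) :: real)"
  define x where "x = (\<lambda>e. of_bool (e \<in> F \<and> fst (ends e) \<in> S \<and> snd (ends e) \<in> S \<and>
      \<not>(\<exists>Q\<in>Ps. fst (ends e) \<in> Q \<and> snd (ends e) \<in> Q)) :: real)"
  define dl where "dl = (\<lambda>e. of_bool (fst (ends e) \<in> S) + of_bool (snd (ends e) \<in> S) :: real)"
  define dlF where "dlF = (\<lambda>e. of_bool (e \<in> F) * dl e)"
  define T where "T = real (\<Sum>P\<in>I. bdry E ends P)"
  define B where "B = real (bdry E ends S)"
  define D where "D = real (degS E ends S)"
  define DF where "DF = real (degS F ends S)"
  define X where "X = real (card (xset F ends S Ps))"
  have T_eq: "T = (\<Sum>e\<in>E. cf e)"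
  proof -
    have "T = (\<Sum>P\<in>I. \<Sum>e\<in>E. of_bool ((fst (ends e) \<in> P) \<noteq> (snd (ends e) \<in> P)) :: real)"
      unfolding T_def of_nat_sum bdry_def cut_edges_def using finE by (simp only: card_filter_real)
    also have "\<dots> = (\<Sum>e\<in>E. cf e)" unfolding cf_def by (rule sum.swap)
    finally show ?thesis .
  qed
  have B_eq: "B = (\<Sum>e\<in>E. b e)"
    unfolding B_def b_def bdry_def cut_edges_def using finE by (simp only: card_filter_real)
  have D_eq: "D = (\<Sum>e\<in>E. dl e)"
    unfolding D_def dl_def using degS_sum[OF finE finS] loop by simp
  have DF_eq: "DF = (\<Sum>e\<in>E. dlF e)"
  proof -
    have "DF = (\<Sum>e\<in>F. dl e)"
      unfolding DF_def dl_def using degS_sum[OF finF finS] loop FE by auto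
    also have "\<dots> = (\<Sum>e\<in>E. dlF e)"
    proof -
      have "(\<Sum>e\<in>E. dlF e) = (\<Sum>e\<in>E \<inter> {e. e \<in> F}. dl e)"
        unfolding dlF_def by (rule sum_of_bool_mult_eq[OF finE])
      also have "E \<inter> {e. e \<in> F} = F" using FE by blast
      finally show ?thesis by simp
    qed
    finally show ?thesis .
  qed
  have X_eq: "X = (\<Sum>e\<in>E. x e)"
  proof -
    have "xset F ends S Ps = {e\<in>E. e \<in> F \<and> fst (ends e) \<in> S \<and> snd (ends e) \<in> S \<and>
      \<not>(\<exists>Q\<in>Ps. fst (ends e) \<in> Q \<and> snd (ends e) \<in> Q)}" using FE by (auto simp: xset_def)
    then show ?thesis unfolding X_def x_def using card_filter_real[OF finE] by simp
  qed
  have TB: "T \<le> B + 2 * X + D - DF"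
  proof -
    have "T \<le> (\<Sum>e\<in>E. b e + 2 * x e + dl e - dlF e)"
      unfolding T_eq
    proof (rule sum_mono)
      fix e assume "e \<in> E"
      show "cf e \<le> b e + 2 * x e + dl e - dlF e"
        using edge_ineq2[OF finI IPs disj, of "fst (ends e)" "snd (ends e)" "e \<in> F"]
        unfolding cf_def b_def x_def dl_def dlF_def S_def by simp
    qed
    also have "\<dots> = B + 2 * X + D - DF"
      unfolding B_eq X_eq D_eq DF_eq by (simp add: sum.distrib sum_subtractf sum_distrib_left)
    finally show ?thesis .
  qed
  have BT: "B \<le> T"
    unfolding B_eq T_eq
  proof (rule sum_mono)
    fix e assume "e \<in> E"
    show "b e \<le> cf e" using edge_ineq1[OF finI] unfolding b_def cf_def S_def by simp
  qed
  have BD: "B \<le> D"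
    unfolding B_eq D_eq by (rule sum_mono) (auto simp: b_def dl_def)
  have XI: "X \<le> real k / 4 * real (card I)"
  proof -
    have c: "X + real k / 4 \<le> real k / 4 * real (card {Q\<in>Ps. Q \<inter> S \<noteq> {}})"
      unfolding X_def using nd_count[OF reach Vne finF SV] .
    have sub: "{Q\<in>Ps. Q \<inter> S \<noteq> {}} \<subseteq> I"
    proof
      fix Q assume "Q \<in> {Q\<in>Ps. Q \<inter> S \<noteq> {}}"
      then obtain y P where "Q \<in> Ps" "y \<in> Q" "P \<in> I" "y \<in> P" unfolding S_def by blast
      then have "Q = P" using disj IPs by blast
      then show "Q \<in> I" using \<open>P \<in> I\<close> by simp
    qed
    have "card {Q\<in>Ps. Q \<inter> S \<noteq> {}} \<le> card I" using card_mono[OF finI sub] .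
    then have "real k / 4 * real (card {Q\<in>Ps. Q \<inter> S \<noteq> {}}) \<le> real k / 4 * real (card I)"
      by (intro mult_left_mono) auto
    then show ?thesis using c by simp
  qed
  have kT: "real k * real (card I) \<le> T"
  proof -
    have indE: "induced_edges ends E V = E" using loop by (auto simp: induced_edges_def)
    have "\<forall>P\<in>I. real k \<le> real (bdry E ends P)"
    proof
      fix P assume "P \<in> I"
      then have "P \<noteq> {}" "P \<subset> V" using Pne IPs proper by blast+
      then show "real k \<le> real (bdry E ends P)"
        using kconn indE unfolding edge_conn_def bdry_def by auto
    qed
    then have "(\<Sum>P\<in>I. real k) \<le> (\<Sum>P\<in>I. real (bdry E ends P))" by (intro sum_mono) auto
    then show ?thesis unfolding T_def of_nat_sum by (simp add: mult.commute)
  qed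
  show ?thesis
  proof (cases "B = 0")
    case True
    then show ?thesis unfolding cond_def B_def S_def by simp
  next
    case False
    then have Bpos: "B > 0" unfolding B_def by simp
    have Dpos: "D > 0" using Bpos BD by linarith
    have B8: "B < D / 8" using phi Dpos unfolding cond_def B_def D_def S_def
      by (simp add: divide_less_eq)
    have "DF \<ge> 7 / 8 * D" using dF unfolding DF_def D_def S_def .
    then have "T \<le> D / 2" using TB B8 XI kT by linarith
    moreover have Tpos: "T > 0" using Bpos BT by linarith
    ultimately have "B / (D / 2) \<le> B / T"
      using Bpos Dpos by (intro divide_left_mono) auto
    moreover have "2 * cond E ends S = B / (D / 2)" unfolding cond_def B_def D_def by simp
    ultimately show ?thesis unfolding S_def B_def T_def by simp
  qed
qed

end
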